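(* Let $A,A^*$ be a Leonard pair in $\mathcal A$. Then there exists a unique antiautomorphism $\dagger$ of $\mathcal A$ (i.e. a $\mathbb K$-linear bijection $\mathcal A\to\mathcal A$ with $(XY)^\dagger=Y^\dagger X^\dagger$ for all $X,Y$) such that $A^\dagger=A$ and $A^{*\dagger}=A^*$. Moreover $X^{\dagger\dagger}=X$ for all $X\in\mathcal A$.
   Context: Let $\mathbb K$ be a field, $d\ge0$ an integer, and $\mathcal A$ a $\mathbb K$-algebra isomorphic to $\mathrm{Mat}_{d+1}(\mathbb K)$; let $V$ be an irreducible (left) $\mathcal A$-module (so $\dim V=d+1$). A square matrix is tridiagonal if every nonzero entry lies on the diagonal, subdiagonal or superdiagonal; a tridiagonal matrix is irreducible if all its subdiagonal and superdiagonal entries are nonzero. A Leonard pair in $\mathcal A$ is an ordered pair $A,A^*$ of elements of $\mathcal A$ such that (i) there is a basis of $V$ with respect to which the matrix representing $A$ is irreducible tridiagonal and the matrix representing $A^*$ is diagonal, and (ii) there is a basis of $V$ with respect to which the matrix representing $A$ is diagonal and the matrix representing $A^*$ is irreducible tridiagonal. *)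

theory Defs
  imports "Jordan_Normal_Form.Matrix"
begin

text \<open>We take the algebra \<open>\<A>\<close> to be the full matrix algebra of (d+1) x (d+1) matrices
  over the field \<open>'a\<close> (every algebra isomorphic to it gives an equivalent statement),
  and \<open>V\<close> the column space of dimension d+1. A basis of V corresponds to an invertible
  matrix P (its columns), and the matrix representing X with respect to that basis is P^-1 X P.\<close>

definition tridiagonal :: "'a::zero mat \<Rightarrow> bool" where
  "tridiagonal M \<longleftrightarrow> (\<forall>i<dim_row M. \<forall>j<dim_col M. (i > j + 1 \<or> j > i + 1) \<longrightarrow> M $$ (i,j) = 0)"

definition irreducible_tridiagonal :: "'a::zero mat \<Rightarrow> bool" where
  "irreducible_tridiagonal M \<longleftrightarrow> tridiagonal M \<and>
     (\<forall>i. i + 1 < dim_row M \<longrightarrow> M $$ (i+1,i) \<noteq> 0 \<and> M $$ (i,i+1) \<noteq> 0)"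

definition leonard_pair :: "nat \<Rightarrow> 'a::field mat \<Rightarrow> 'a mat \<Rightarrow> bool" where
  "leonard_pair d A As \<longleftrightarrow>
     A \<in> carrier_mat (d+1) (d+1) \<and> As \<in> carrier_mat (d+1) (d+1) \<and>
     (\<exists>P Pi. P \<in> carrier_mat (d+1) (d+1) \<and> Pi \<in> carrier_mat (d+1) (d+1) \<and>
        P * Pi = 1\<^sub>m (d+1) \<and> Pi * P = 1\<^sub>m (d+1) \<and>
        irreducible_tridiagonal (Pi * A * P) \<and> diagonal_mat (Pi * As * P)) \<and>
     (\<exists>P Pi. P \<in> carrier_mat (d+1) (d+1) \<and> Pi \<in> carrier_mat (d+1) (d+1) \<and>
        P * Pi = 1\<^sub>m (d+1) \<and> Pi * P = 1\<^sub>m (d+1) \<and>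
        diagonal_mat (Pi * A * P) \<and> irreducible_tridiagonal (Pi * As * P))"

definition antiautomorphism :: "nat \<Rightarrow> ('a::field mat \<Rightarrow> 'a mat) \<Rightarrow> bool" where
  "antiautomorphism d f \<longleftrightarrow>
     bij_betw f (carrier_mat (d+1) (d+1)) (carrier_mat (d+1) (d+1)) \<and>
     (\<forall>X\<in>carrier_mat (d+1) (d+1). \<forall>Y\<in>carrier_mat (d+1) (d+1). f (X + Y) = f X + f Y) \<and>
     (\<forall>c. \<forall>X\<in>carrier_mat (d+1) (d+1). f (c \<cdot>\<^sub>m X) = c \<cdot>\<^sub>m f X) \<and>
     (\<forall>X\<in>carrier_mat (d+1) (d+1). \<forall>Y\<in>carrier_mat (d+1) (d+1). f (X * Y) = f Y * f X)"

end

theory Submission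
  imports Defs
begin

lemma sum_single:
  fixes h :: "nat \<Rightarrow> 'a::comm_monoid_add"
  assumes "j < n" "\<And>l. l < n \<Longrightarrow> l \<noteq> j \<Longrightarrow> h l = 0"
  shows "(\<Sum>l\<in>{0..<n}. h l) = h j"
proof -
  have "(\<Sum>l\<in>{0..<n}. h l) = h j + (\<Sum>l\<in>{0..<n} - {j}. h l)"
    using assms(1) by (simp add: sum.remove)
  also have "(\<Sum>l\<in>{0..<n} - {j}. h l) = 0" using assms(2) by (intro sum.neutral) auto
  finally show ?thesis by simp
qed

definition munit :: "nat \<Rightarrow> nat \<Rightarrow> nat \<Rightarrow> 'a::field mat" where
  "munit n i j = mat n n (\<lambda>(a,b). if a = i \<and> b = j then 1 else 0)"

lemma munit_carrier[simp]: "munit n i j \<in> carrier_mat n n"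
  by (simp add: munit_def)

lemma munit_mult:
  assumes "i < n" "j < n" "k < n"
  shows "munit n i j * munit n j k = (munit n i k :: 'a::field mat)"
proof (rule eq_matI)
  fix a b assume ab: "a < dim_row (munit n i k :: 'a mat)" "b < dim_col (munit n i k :: 'a mat)"
  hence ab': "a < n" "b < n" by (auto simp: munit_def)
  have "(munit n i j * munit n j k :: 'a mat) $$ (a,b) =
     (\<Sum>l\<in>{0..<n}. (if a = i \<and> l = j then 1 else 0) * (if l = j \<and> b = k then 1 else (0::'a)))"
    using ab' by (simp add: munit_def scalar_prod_def)
  also have "\<dots> = (if a = i \<and> j = j then 1 else 0) * (if j = j \<and> b = k then 1 else (0::'a))"
    by (rule sum_single) (use assms in auto)
  finally show "(munit n i j * munit n j k :: 'a mat) $$ (a,b) = munit n i k $$ (a,b)"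
    using ab' by (simp add: munit_def)
qed (auto simp: munit_def)

lemma munit_sandwich:
  assumes "i < n" "j < n" and M: "M \<in> carrier_mat n n"
  shows "munit n i i * M * munit n j j = M $$ (i,j) \<cdot>\<^sub>m (munit n i j :: 'a::field mat)"
proof -
  have 1: "munit n i i * M = mat n n (\<lambda>(a,b). if a = i then M $$ (i,b) else 0)"
  proof (rule eq_matI)
    fix a b assume "a < dim_row (mat n n (\<lambda>(a,b). if a = i then M $$ (i,b) else (0::'a)))"
      "b < dim_col (mat n n (\<lambda>(a,b). if a = i then M $$ (i,b) else (0::'a)))"
    hence ab: "a < n" "b < n" by auto
    have "(munit n i i * M) $$ (a,b) = (\<Sum>l\<in>{0..<n}. (if a = i \<and> l = i then 1 else 0) * M $$ (l,b))"
      using ab M by (simp add: munit_def scalar_prod_def)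
    also have "\<dots> = (if a = i \<and> i = i then 1 else 0) * M $$ (i,b)"
      by (rule sum_single) (use assms in auto)
    finally show "(munit n i i * M) $$ (a,b) = mat n n (\<lambda>(a,b). if a = i then M $$ (i,b) else 0) $$ (a,b)"
      using ab by simp
  qed (use M in \<open>auto simp: munit_def\<close>)
  show ?thesis
  proof (rule eq_matI)
    fix a b assume "a < dim_row (M $$ (i,j) \<cdot>\<^sub>m (munit n i j :: 'a::field mat))"
      "b < dim_col (M $$ (i,j) \<cdot>\<^sub>m (munit n i j :: 'a::field mat))"
    hence ab: "a < n" "b < n" by (auto simp: munit_def)
    have "(munit n i i * M * munit n j j) $$ (a,b) = (\<Sum>l\<in>{0..<n}. (if a = i then M $$ (i,l) else 0) * (if l = j \<and> b = j then 1 else 0))"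
      unfolding 1 using ab by (simp add: munit_def scalar_prod_def)
    also have "\<dots> = (if a = i then M $$ (i,j) else 0) * (if j = j \<and> b = j then 1 else 0)"
      by (rule sum_single) (use assms in auto)
    finally show "(munit n i i * M * munit n j j) $$ (a,b) = (M $$ (i,j) \<cdot>\<^sub>m (munit n i j :: 'a::field mat)) $$ (a,b)"
      using ab by (simp add: munit_def)
  qed (use M in \<open>auto simp: munit_def\<close>)
qed

definition subalg :: "nat \<Rightarrow> 'a::field mat set \<Rightarrow> bool" where
  "subalg n S \<longleftrightarrow> S \<subseteq> carrier_mat n n \<and> 1\<^sub>m n \<in> S \<and>
     (\<forall>X\<in>S. \<forall>Y\<in>S. X + Y \<in> S \<and> X * Y \<in> S) \<and> (\<forall>c. \<forall>X\<in>S. c \<cdot>\<^sub>m X \<in> S)"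

definition polyM :: "nat \<Rightarrow> 'a::field mat \<Rightarrow> 'a list \<Rightarrow> 'a mat" where
  "polyM n M L = foldr (\<lambda>c X. (M + (- c) \<cdot>\<^sub>m 1\<^sub>m n) * X) L (1\<^sub>m n)"

lemma polyM_Nil[simp]: "polyM n M [] = 1\<^sub>m n" by (simp add: polyM_def)
lemma polyM_Cons[simp]: "polyM n M (c # L) = (M + (- c) \<cdot>\<^sub>m 1\<^sub>m n) * polyM n M L"
  by (simp add: polyM_def)

lemma polyM_carrier[simp]: "M \<in> carrier_mat n n \<Longrightarrow> polyM n M L \<in> carrier_mat n n"
  by (induction L) auto

lemma polyM_in_subalg: "subalg n S \<Longrightarrow> M \<in> S \<Longrightarrow> polyM n M L \<in> S"
  by (induction L) (auto simp: subalg_def)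

lemma polyM_diag:
  assumes D: "D \<in> carrier_mat n n" "diagonal_mat D"
  shows "polyM n D L = mat n n (\<lambda>(a,b). if a = b then prod_list (map (\<lambda>c. D $$ (a,a) - c) L) else 0)"
proof (induction L)
  case Nil
  show ?case by (rule eq_matI) auto
next
  case (Cons c L)
  show ?case
  proof (rule eq_matI)
    fix a b assume "a < dim_row (mat n n (\<lambda>(a,b). if a = b then prod_list (map (\<lambda>c. D $$ (a,a) - c) (c # L)) else 0))"
      "b < dim_col (mat n n (\<lambda>(a,b). if a = b then prod_list (map (\<lambda>c. D $$ (a,a) - c) (c # L)) else 0))"
    hence ab: "a < n" "b < n" by auto
    have "polyM n D (c # L) $$ (a,b) = (\<Sum>l\<in>{0..<n}. (D + (- c) \<cdot>\<^sub>m 1\<^sub>m n) $$ (a,l) *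
        (if l = b then prod_list (map (\<lambda>c. D $$ (l,l) - c) L) else 0))"
      using ab D by (auto simp: Cons scalar_prod_def intro!: sum.cong)
    also have "\<dots> = (D + (- c) \<cdot>\<^sub>m 1\<^sub>m n) $$ (a,b) * prod_list (map (\<lambda>c. D $$ (b,b) - c) L)"
      by (subst sum_single[of b]) (use ab in auto)
    finally show "polyM n D (c # L) $$ (a,b) = mat n n (\<lambda>(a,b). if a = b then prod_list (map (\<lambda>c. D $$ (a,a) - c) (c # L)) else 0) $$ (a,b)"
      using ab D unfolding diagonal_mat_def by auto
  qed (use D polyM_carrier[OF D(1), of "c # L"] in auto)
qed

lemma munit_diag_in:
  assumes S: "subalg n S" and D: "D \<in> S" "D \<in> carrier_mat n n" "diagonal_mat D"
    and dist: "\<forall>i<n. \<forall>j<n. i \<noteq> j \<longrightarrow> D $$ (i,i) \<noteq> D $$ (j,j)"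
    and i: "i < n"
  shows "munit n i i \<in> S"
proof -
  define L where "L = map (\<lambda>j. D $$ (j,j)) (filter (\<lambda>j. j \<noteq> i) [0..<n])"
  define c where "c = prod_list (map (\<lambda>e. D $$ (i,i) - e) L)"
  have c0: "c \<noteq> 0" unfolding c_def L_def using dist i by (auto simp: prod_list_zero_iff)
  have "polyM n D L = c \<cdot>\<^sub>m munit n i i"
    unfolding polyM_diag[OF D(2,3)]
  proof (rule eq_matI)
    fix a b assume "a < dim_row (c \<cdot>\<^sub>m munit n i i)" "b < dim_col (c \<cdot>\<^sub>m munit n i i)"
    hence ab: "a < n" "b < n" by (auto simp: munit_def)
    show "mat n n (\<lambda>(a,b). if a = b then prod_list (map (\<lambda>c. D $$ (a,a) - c) L) else 0) $$ (a,b) = (c \<cdot>\<^sub>m munit n i i) $$ (a,b)"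
    proof (cases "a = b \<and> a = i")
      case True thus ?thesis using ab by (auto simp: munit_def c_def)
    next
      case False
      show ?thesis
      proof (cases "a = b")
        case True
        hence "a \<noteq> i" using False by auto
        hence "D $$ (a,a) \<in> set L" unfolding L_def using ab by auto
        thus ?thesis using ab True \<open>a \<noteq> i\<close> by (auto simp: munit_def prod_list_zero_iff)
      qed (use ab in \<open>auto simp: munit_def\<close>)
    qed
  qed (auto simp: munit_def)
  hence "munit n i i = (1 / c) \<cdot>\<^sub>m polyM n D L"
    using c0 by (intro eq_matI) (auto simp: munit_def)
  thus ?thesis using polyM_in_subalg[OF S D(1)] S unfolding subalg_def by metis
qed

lemma subalg_full:
  assumes S: "subalg n S" and T: "T \<in> S" "T \<in> carrier_mat n n" "irreducible_tridiagonal T"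
    and D: "D \<in> S" "D \<in> carrier_mat n n" "diagonal_mat D"
    and dist: "\<forall>i<n. \<forall>j<n. i \<noteq> j \<longrightarrow> D $$ (i,i) \<noteq> D $$ (j,j)"
  shows "carrier_mat n n \<subseteq> S"
proof -
  have Sc: "\<And>X Y. X \<in> S \<Longrightarrow> Y \<in> S \<Longrightarrow> X * Y \<in> S" "\<And>X Y. X \<in> S \<Longrightarrow> Y \<in> S \<Longrightarrow> X + Y \<in> S"
    "\<And>c X. X \<in> S \<Longrightarrow> c \<cdot>\<^sub>m X \<in> S" "1\<^sub>m n \<in> S"
    using S unfolding subalg_def by auto
  have Ed: "\<And>i. i < n \<Longrightarrow> munit n i i \<in> S" using munit_diag_in[OF S D dist] by simp
  have adj: "munit n i j \<in> S" if ij: "i < n" "j < n" "j = i + 1 \<or> i = j + 1" for i j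
  proof -
    have "T $$ (i,j) \<noteq> 0" using T(2,3) ij unfolding irreducible_tridiagonal_def by auto
    moreover have "munit n i i * T * munit n j j \<in> S" using Sc(1)[OF Sc(1)[OF Ed[OF ij(1)] T(1)] Ed[OF ij(2)]] .
    ultimately have "(1 / T $$ (i,j)) \<cdot>\<^sub>m (munit n i i * T * munit n j j) \<in> S" using Sc(3) by blast
    moreover have "(1 / T $$ (i,j)) \<cdot>\<^sub>m (munit n i i * T * munit n j j) = munit n i j"
      using munit_sandwich[OF ij(1,2) T(2)] \<open>T $$ (i,j) \<noteq> 0\<close>
      by (intro eq_matI) (auto simp: munit_def)
    ultimately show ?thesis by simp
  qed
  have up: "\<forall>i. i + k < n \<longrightarrow> munit n i (i + k) \<in> S \<and> munit n (i + k) i \<in> S" for k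
  proof (induction k)
    case 0 thus ?case using Ed by auto
  next
    case (Suc k)
    show ?case
    proof (intro allI impI)
      fix i assume i: "i + Suc k < n"
      have "munit n i (i + k) * munit n (i + k) (i + Suc k) = munit n i (i + Suc k)"
        by (rule munit_mult) (use i in auto)
      moreover have "munit n (i + Suc k) (i + k) * munit n (i + k) i = munit n (i + Suc k) i"
        by (rule munit_mult) (use i in auto)
      moreover have "munit n (i + k) (i + Suc k) \<in> S" "munit n (i + Suc k) (i + k) \<in> S"
        using adj i by auto
      moreover have "munit n i (i + k) \<in> S" "munit n (i + k) i \<in> S" using Suc.IH i by auto
      ultimately show "munit n i (i + Suc k) \<in> S \<and> munit n (i + Suc k) i \<in> S"
        using Sc(1) by metis
    qed
  qed
  have E: "munit n i j \<in> S" if "i < n" "j < n" for i j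
  proof (cases "i \<le> j")
    case True
    then obtain k where "j = i + k" using le_Suc_ex by blast
    thus ?thesis using up that by auto
  next
    case False
    then obtain k where "i = j + k" using le_Suc_ex[of j i] by auto
    thus ?thesis using up that by auto
  qed
  define supp where "supp X = {(i,j). i < n \<and> j < n \<and> X $$ (i,j) \<noteq> 0}" for X :: "'a mat"
  have fs: "finite (supp X)" for X
    by (rule finite_subset[of _ "{..<n} \<times> {..<n}"]) (auto simp: supp_def)
  have main: "\<forall>X\<in>carrier_mat n n. card (supp X) = k \<longrightarrow> X \<in> S" for k
  proof (induction k)
    case 0
    show ?case
    proof (intro ballI impI)
      fix X :: "'a mat" assume X: "X \<in> carrier_mat n n" "card (supp X) = 0"
      hence "supp X = {}" using fs by auto
      hence "X = 0 \<cdot>\<^sub>m 1\<^sub>m n" using X(1) by (intro eq_matI) (auto simp: supp_def)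
      thus "X \<in> S" using Sc by simp
    qed
  next
    case (Suc k)
    show ?case
    proof (intro ballI impI)
      fix X :: "'a mat" assume X: "X \<in> carrier_mat n n" "card (supp X) = Suc k"
      then obtain p where "p \<in> supp X" by (metis card.empty ex_in_conv nat.distinct(1))
      then obtain i j where ij: "(i,j) \<in> supp X" by (cases p) auto
      hence ij': "i < n" "j < n" "X $$ (i,j) \<noteq> 0" by (auto simp: supp_def)
      define X' where "X' = X + (- X $$ (i,j)) \<cdot>\<^sub>m munit n i j"
      have X'c: "X' \<in> carrier_mat n n" using X by (simp add: X'_def)
      have ent: "X' $$ (a,b) = (if a = i \<and> b = j then 0 else X $$ (a,b))" if "a < n" "b < n" for a b
        using X(1) that by (simp add: X'_def munit_def)
      have "supp X' = supp X - {(i,j)}" unfolding supp_def using ent by (auto split: if_splits)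
      hence "card (supp X') = k" using X(2) ij fs by simp
      hence "X' \<in> S" using Suc.IH X'c by blast
      moreover have "X = X' + X $$ (i,j) \<cdot>\<^sub>m munit n i j"
        using X X'c ent by (intro eq_matI) (auto simp: munit_def)
      ultimately show "X \<in> S" using Sc E[OF ij'(1,2)] by metis
    qed
  qed
  show ?thesis using main by blast
qed

lemma shift_entry:
  "i < n \<Longrightarrow> 0 < n \<Longrightarrow> T \<in> carrier_mat n n \<Longrightarrow> (M::'a::field mat) \<in> carrier_mat n n \<Longrightarrow>
   ((T + (-c) \<cdot>\<^sub>m 1\<^sub>m n) * M) $$ (i,0) = (\<Sum>l\<in>{0..<n}. (T $$ (i,l) - c * (if i = l then 1 else 0)) * M $$ (l,0))"
  apply (simp add: scalar_prod_def)
  apply (rule sum.cong)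
   apply auto
  done

lemma tri_polyM:
  assumes T: "T \<in> carrier_mat n n" "irreducible_tridiagonal T"
  shows "length L < n \<Longrightarrow> (\<forall>i<n. length L < i \<longrightarrow> polyM n T L $$ (i,0) = 0) \<and> polyM n T L $$ (length L, 0) \<noteq> 0"
proof (induction L)
  case Nil
  thus ?case by auto
next
  case (Cons c L)
  define m where "m = length L"
  define M where "M = polyM n T L"
  have Mc: "M \<in> carrier_mat n n" using T by (simp add: M_def)
  have mn: "m + 1 < n" using Cons.prems by (simp add: m_def)
  have IH: "\<And>i. i < n \<Longrightarrow> m < i \<Longrightarrow> M $$ (i,0) = 0" "M $$ (m,0) \<noteq> 0"
    using Cons.IH mn unfolding m_def M_def by auto
  have tz: "T $$ (i,l) = 0" if "i < n" "l < n" "i > l + 1 \<or> l > i + 1" for i l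
    using T that unfolding irreducible_tridiagonal_def tridiagonal_def by auto
  have ent: "polyM n T (c # L) $$ (i,0) = (\<Sum>l\<in>{0..<n}. (T $$ (i,l) - c * (if i = l then 1 else 0)) * M $$ (l,0))"
    if "i < n" for i
    using shift_entry[OF that _ T(1) polyM_carrier[OF T(1), of L], of c] mn unfolding M_def by simp
  have z: "polyM n T (c # L) $$ (i,0) = 0" if "i < n" "m + 1 < i" for i
    unfolding ent[OF that(1)]
  proof (rule sum.neutral, intro ballI)
    fix l assume l: "l \<in> {0..<n}"
    show "(T $$ (i,l) - c * (if i = l then 1 else 0)) * M $$ (l,0) = 0"
    proof (cases "l \<le> m")
      case True thus ?thesis using tz[of i l] that l by auto
    next
      case False thus ?thesis using IH(1)[of l] l by auto
    qed
  qed
  have "polyM n T (c # L) $$ (m+1,0) = (T $$ (m+1,m) - c * (if m + 1 = m then 1 else 0)) * M $$ (m,0)"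
    unfolding ent[OF mn]
  proof (rule sum_single)
    show "m < n" using mn by simp
    fix l assume l: "l < n" "l \<noteq> m"
    show "(T $$ (m+1,l) - c * (if m + 1 = l then 1 else 0)) * M $$ (l,0) = 0"
    proof (cases "l < m")
      case True thus ?thesis using tz[of "m+1" l] mn l by auto
    next
      case False thus ?thesis using IH(1)[of l] l by auto
    qed
  qed
  moreover have "T $$ (m+1,m) \<noteq> 0" using T mn unfolding irreducible_tridiagonal_def by auto
  ultimately have "polyM n T (c # L) $$ (m+1,0) \<noteq> 0" using IH(2) by simp
  thus ?case using z unfolding m_def by auto
qed

lemma conj_one: "(P::'a::field mat) \<in> carrier_mat n n \<Longrightarrow> R \<in> carrier_mat n n \<Longrightarrow> R * P = 1\<^sub>m n \<Longrightarrow>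
  R * 1\<^sub>m n * P = 1\<^sub>m n"
  by simp

lemma conj_mult:
  assumes "(P::'a::field mat) \<in> carrier_mat n n" "R \<in> carrier_mat n n" "P * R = 1\<^sub>m n"
    "X \<in> carrier_mat n n" "Y \<in> carrier_mat n n"
  shows "R * (X * Y) * P = (R * X * P) * (R * Y * P)"
proof -
  have PR: "P * (R * Z) = Z" if "Z \<in> carrier_mat n n" for Z
  proof -
    have "P * (R * Z) = (P * R) * Z" using assoc_mult_mat[of P n n R n Z n] assms that by simp
    also have "\<dots> = 1\<^sub>m n * Z" by (simp only: assms(3))
    also have "1\<^sub>m n * Z = Z" by (rule left_mult_one_mat[OF that])
    finally show ?thesis .
  qed
  have c: "R * X \<in> carrier_mat n n" "Y * P \<in> carrier_mat n n" "X * Y \<in> carrier_mat n n" "R * Y \<in> carrier_mat n n"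
    "R * X * P \<in> carrier_mat n n" "R * Y * P \<in> carrier_mat n n"
    using assms by auto
  have e1: "R * Y * P = R * (Y * P)" using assoc_mult_mat[OF assms(2,5,1)] .
  have "(R * X * P) * (R * Y * P) = (R * X) * (P * (R * (Y * P)))"
    unfolding e1 using assoc_mult_mat[OF c(1) assms(1), of "R * (Y * P)" n] c(6) e1 by simp
  also have "\<dots> = (R * X) * (Y * P)" using PR[OF c(2)] by simp
  also have "\<dots> = R * (X * (Y * P))" using assoc_mult_mat[OF assms(2,4) c(2)] .
  also have "\<dots> = R * ((X * Y) * P)" using assoc_mult_mat[OF assms(4,5,1)] by simp
  also have "\<dots> = R * (X * Y) * P" using assoc_mult_mat[OF assms(2) c(3) assms(1)] by simp
  finally show ?thesis by simp
qed

lemma conj_add: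
  assumes "(P::'a::field mat) \<in> carrier_mat n n" "R \<in> carrier_mat n n"
    "X \<in> carrier_mat n n" "Y \<in> carrier_mat n n"
  shows "R * (X + Y) * P = R * X * P + R * Y * P"
  using assms by (simp add: mult_add_distrib_mat[of _ n n] add_mult_distrib_mat[of _ n n])

lemma conj_smult:
  assumes "(P::'a::field mat) \<in> carrier_mat n n" "R \<in> carrier_mat n n" "X \<in> carrier_mat n n"
  shows "R * (c \<cdot>\<^sub>m X) * P = c \<cdot>\<^sub>m (R * X * P)"
proof -
  have "R * (c \<cdot>\<^sub>m X) = c \<cdot>\<^sub>m (R * X)" using assms mult_smult_distrib[of R n n X n] by simp
  moreover have "(c \<cdot>\<^sub>m (R * X)) * P = c \<cdot>\<^sub>m (R * X * P)" using assms mult_smult_assoc_mat[of "R * X" n n P n] by simp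
  ultimately show ?thesis by simp
qed

lemma conj_inv:
  assumes "(P::'a::field mat) \<in> carrier_mat n n" "R \<in> carrier_mat n n" "R * P = 1\<^sub>m n" "X \<in> carrier_mat n n"
  shows "R * (P * X * R) * P = X"
proof -
  have RP: "R * (P * Z) = Z" if "Z \<in> carrier_mat n n" for Z
  proof -
    have "R * (P * Z) = (R * P) * Z" using assoc_mult_mat[of R n n P n Z n] assms that by simp
    also have "\<dots> = 1\<^sub>m n * Z" by (simp only: assms(3))
    also have "1\<^sub>m n * Z = Z" by (rule left_mult_one_mat[OF that])
    finally show ?thesis .
  qed
  show ?thesis using assms by (simp add: RP carrier_matD)
qed

lemma conj_polyM:
  assumes "(P::'a::field mat) \<in> carrier_mat n n" "R \<in> carrier_mat n n" "P * R = 1\<^sub>m n" "R * P = 1\<^sub>m n"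
    "M \<in> carrier_mat n n"
  shows "R * polyM n M L * P = polyM n (R * M * P) L"
proof (induction L)
  case Nil thus ?case using assms by simp
next
  case (Cons c L)
  have "R * polyM n M (c # L) * P = (R * (M + (- c) \<cdot>\<^sub>m 1\<^sub>m n) * P) * (R * polyM n M L * P)"
    using assms by (simp only: polyM_Cons, intro conj_mult) auto
  also have "R * (M + (- c) \<cdot>\<^sub>m 1\<^sub>m n) * P = R * M * P + (- c) \<cdot>\<^sub>m 1\<^sub>m n"
    using assms by (simp add: conj_add[of P n R] conj_smult[of P n R])
  finally show ?case using Cons by simp
qed

lemma diag_distinct:
  fixes M :: "'a::field mat"
  assumes M: "M \<in> carrier_mat n n"
    and P: "P \<in> carrier_mat n n" "R \<in> carrier_mat n n" "P * R = 1\<^sub>m n" "R * P = 1\<^sub>m n"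
    and Dd: "diagonal_mat (R * M * P)"
    and Q: "Q \<in> carrier_mat n n" "Qi \<in> carrier_mat n n" "Q * Qi = 1\<^sub>m n" "Qi * Q = 1\<^sub>m n"
    and Tt: "irreducible_tridiagonal (Qi * M * Q)"
  shows "\<forall>i<n. \<forall>j<n. i \<noteq> j \<longrightarrow> (R * M * P) $$ (i,i) \<noteq> (R * M * P) $$ (j,j)"
proof (rule ccontr)
  assume "\<not> ?thesis"
  then obtain i j where ij: "i < n" "j < n" "i \<noteq> j" "(R * M * P) $$ (i,i) = (R * M * P) $$ (j,j)" by blast
  define D where "D = R * M * P"
  have Dc: "D \<in> carrier_mat n n" using M P by (simp add: D_def)
  define L where "L = remdups (map (\<lambda>k. D $$ (k,k)) [0..<n])"
  have nd: "\<not> distinct (map (\<lambda>k. D $$ (k,k)) [0..<n])"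
  proof
    assume "distinct (map (\<lambda>k. D $$ (k,k)) [0..<n])"
    hence "inj_on (\<lambda>k. D $$ (k,k)) {0..<n}" by (simp add: distinct_map)
    hence "i = j" using ij unfolding D_def inj_on_def by auto
    thus False using ij by simp
  qed
  have "length L = card (set (map (\<lambda>k. D $$ (k,k)) [0..<n]))" unfolding L_def by (rule length_remdups_card_conv)
  moreover have "card (set (map (\<lambda>k. D $$ (k,k)) [0..<n])) \<noteq> n"
    using nd card_distinct[of "map (\<lambda>k. D $$ (k,k)) [0..<n]"] by auto
  moreover have "card (set (map (\<lambda>k. D $$ (k,k)) [0..<n])) \<le> n"
    using card_length[of "map (\<lambda>k. D $$ (k,k)) [0..<n]"] by simp
  ultimately have lL: "length L < n" by simp
  have z: "polyM n D L = 0\<^sub>m n n"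
    unfolding polyM_diag[OF Dc Dd[folded D_def]]
  proof (rule eq_matI)
    fix a b assume "a < dim_row (0\<^sub>m n n :: 'a mat)" "b < dim_col (0\<^sub>m n n :: 'a mat)"
    hence ab: "a < n" "b < n" by auto
    have "D $$ (a,a) \<in> set L" using ab unfolding L_def by auto
    thus "mat n n (\<lambda>(a,b). if a = b then prod_list (map (\<lambda>c. D $$ (a,a) - c) L) else 0) $$ (a,b) = 0\<^sub>m n n $$ (a,b)"
      using ab by (auto simp: prod_list_zero_iff)
  qed auto
  have "P * polyM n D L * R = polyM n (P * D * R) L"
    by (rule conj_polyM) (use P Dc in auto)
  moreover have "P * D * R = M" unfolding D_def by (rule conj_inv) (use P M in auto)
  ultimately have "polyM n M L = P * 0\<^sub>m n n * R" using z by simp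
  also have "\<dots> = 0\<^sub>m n n" using P by simp
  finally have zM: "polyM n M L = 0\<^sub>m n n" .
  have "Qi * polyM n M L * Q = polyM n (Qi * M * Q) L"
    by (rule conj_polyM) (use Q M in auto)
  hence "polyM n (Qi * M * Q) L = 0\<^sub>m n n" using zM Q by simp
  moreover have "polyM n (Qi * M * Q) L $$ (length L, 0) \<noteq> 0"
    using tri_polyM[of "Qi * M * Q" n L] Q M Tt lL by auto
  ultimately show False using lL by simp
qed

fun kf :: "'a::field mat \<Rightarrow> nat \<Rightarrow> 'a" where
  "kf T 0 = 1"
| "kf T (Suc i) = kf T i * T $$ (Suc i, i) / T $$ (i, Suc i)"

lemma kf_nz:
  assumes "T \<in> carrier_mat n n" "irreducible_tridiagonal T"
  shows "i < n \<Longrightarrow> kf T i \<noteq> 0"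
proof (induction i)
  case 0 thus ?case by simp
next
  case (Suc i)
  thus ?case using assms unfolding irreducible_tridiagonal_def by auto
qed

definition tau :: "nat \<Rightarrow> 'a::field mat \<Rightarrow> 'a mat \<Rightarrow> 'a mat" where
  "tau n T Y = mat n n (\<lambda>(i,j). kf T i * Y $$ (j,i) / kf T j)"

lemma tau_carrier[simp]: "tau n T Y \<in> carrier_mat n n" by (simp add: tau_def)
lemma tau_dim[simp]: "dim_row (tau n T Y) = n" "dim_col (tau n T Y) = n" by (simp_all add: tau_def)

lemma tau_add: "Y \<in> carrier_mat n n \<Longrightarrow> Z \<in> carrier_mat n n \<Longrightarrow> tau n T (Y + Z) = tau n T Y + tau n T Z"
  by (intro eq_matI) (auto simp: tau_def add_divide_distrib distrib_left)

lemma tau_smult: "Y \<in> carrier_mat n n \<Longrightarrow> tau n T (c \<cdot>\<^sub>m Y) = c \<cdot>\<^sub>m tau n T Y"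
  by (intro eq_matI) (auto simp: tau_def field_simps)

lemma tau_tau:
  assumes "\<And>i. i < n \<Longrightarrow> kf T i \<noteq> 0" "Y \<in> carrier_mat n n"
  shows "tau n T (tau n T Y) = Y"
  using assms by (intro eq_matI) (auto simp: tau_def)

lemma tau_mult:
  assumes k: "\<And>i. i < n \<Longrightarrow> kf T i \<noteq> 0" and YZ: "Y \<in> carrier_mat n n" "Z \<in> carrier_mat n n"
  shows "tau n T (Y * Z) = tau n T Z * tau n T Y"
proof (rule eq_matI)
  fix i j assume "i < dim_row (tau n T Z * tau n T Y)" "j < dim_col (tau n T Z * tau n T Y)"
  hence ij: "i < n" "j < n" by auto
  have "tau n T (Y * Z) $$ (i,j) = kf T i * (\<Sum>l\<in>{0..<n}. Y $$ (j,l) * Z $$ (l,i)) / kf T j"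
    using ij YZ by (simp add: tau_def scalar_prod_def)
  also have "\<dots> = (\<Sum>l\<in>{0..<n}. (kf T i * Z $$ (l,i) / kf T l) * (kf T l * Y $$ (j,l) / kf T j))"
    unfolding sum_distrib_left sum_divide_distrib
    by (rule sum.cong) (use k in \<open>auto simp: field_simps\<close>)
  also have "\<dots> = (tau n T Z * tau n T Y) $$ (i,j)"
    using ij by (simp add: tau_def scalar_prod_def)
  finally show "tau n T (Y * Z) $$ (i,j) = (tau n T Z * tau n T Y) $$ (i,j)" .
qed (auto simp: tau_def)

lemma tau_T:
  assumes T: "T \<in> carrier_mat n n" "irreducible_tridiagonal T"
  shows "tau n T T = T"
proof (rule eq_matI)
  fix i j assume "i < dim_row T" "j < dim_col T"
  hence ij: "i < n" "j < n" using T by auto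
  have k: "\<And>i. i < n \<Longrightarrow> kf T i \<noteq> 0" using kf_nz[OF T] by blast
  have tz: "T $$ (i,j) = 0" "T $$ (j,i) = 0" if "i > j + 1 \<or> j > i + 1"
    using T that ij unfolding irreducible_tridiagonal_def tridiagonal_def by auto
  have nz: "T $$ (l, Suc l) \<noteq> 0 \<and> T $$ (Suc l, l) \<noteq> 0" if "Suc l < n" for l
    using T that unfolding irreducible_tridiagonal_def by auto
  consider "i > j + 1 \<or> j > i + 1" | "i = j" | "j = Suc i" | "i = Suc j" by linarith
  thus "tau n T T $$ (i,j) = T $$ (i,j)"
  proof cases
    case 1 thus ?thesis using tz ij by (simp add: tau_def)
  next
    case 2 thus ?thesis using ij k by (simp add: tau_def)
  next
    case 3 thus ?thesis using ij k[of i] nz[of i] by (simp add: tau_def field_simps)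
  next
    case 4 thus ?thesis using ij k[of j] nz[of j] by (simp add: tau_def field_simps)
  qed
qed (use T in \<open>auto simp: tau_def\<close>)

lemma tau_D:
  assumes D: "D \<in> carrier_mat n n" "diagonal_mat D" and k: "\<And>i. i < n \<Longrightarrow> kf T i \<noteq> 0"
  shows "tau n T D = D"
proof (rule eq_matI)
  fix i j assume "i < dim_row D" "j < dim_col D"
  hence ij: "i < n" "j < n" using D by auto
  show "tau n T D $$ (i,j) = D $$ (i,j)"
  proof (cases "i = j")
    case True thus ?thesis using ij k by (simp add: tau_def)
  next
    case False thus ?thesis using ij D unfolding diagonal_mat_def by (simp add: tau_def)
  qed
qed (use D in auto)

lemma antiauto_one:
  assumes "antiautomorphism d g"
  shows "g (1\<^sub>m (d+1)) = (1\<^sub>m (d+1) :: 'a::field mat)"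
proof -
  have b: "bij_betw g (carrier_mat (d+1) (d+1)) (carrier_mat (d+1) (d+1))"
    and m: "\<And>X Y. X \<in> carrier_mat (d+1) (d+1) \<Longrightarrow> Y \<in> carrier_mat (d+1) (d+1) \<Longrightarrow> g (X * Y) = g Y * g X"
    using assms unfolding antiautomorphism_def by auto
  obtain Z where Z: "Z \<in> carrier_mat (d+1) (d+1)" "g Z = 1\<^sub>m (d+1)"
    using b unfolding bij_betw_def by (metis imageE one_carrier_mat)
  have g1: "g (1\<^sub>m (d+1)) \<in> carrier_mat (d+1) (d+1)"
    using b unfolding bij_betw_def by auto
  have "g Z = g (Z * 1\<^sub>m (d+1))" using Z by simp
  also have "\<dots> = g (1\<^sub>m (d+1)) * g Z" by (rule m) (use Z in auto)
  also have "\<dots> = g (1\<^sub>m (d+1))" unfolding Z(2) by (rule right_mult_one_mat[OF g1])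
  finally show ?thesis using Z by simp
qed

theorem theorem6p1:
  fixes d :: nat and A As :: "'a::field mat"
  assumes "leonard_pair d A As"
  shows "\<exists>f. antiautomorphism d f \<and> f A = A \<and> f As = As \<and>
            (\<forall>g. antiautomorphism d g \<and> g A = A \<and> g As = As \<longrightarrow>
                 (\<forall>X\<in>carrier_mat (d+1) (d+1). g X = f X)) \<and>
            (\<forall>X\<in>carrier_mat (d+1) (d+1). f (f X) = X)"
proof -
  define n where "n = d + 1"
  obtain P R Q Qi where
    AA: "A \<in> carrier_mat n n" "As \<in> carrier_mat n n" and
    P: "P \<in> carrier_mat n n" "R \<in> carrier_mat n n" "P * R = 1\<^sub>m n" "R * P = 1\<^sub>m n" and
    PT: "irreducible_tridiagonal (R * A * P)" "diagonal_mat (R * As * P)" and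
    Q: "Q \<in> carrier_mat n n" "Qi \<in> carrier_mat n n" "Q * Qi = 1\<^sub>m n" "Qi * Q = 1\<^sub>m n" and
    QT: "diagonal_mat (Qi * A * Q)" "irreducible_tridiagonal (Qi * As * Q)"
  proof -
    have L: "A \<in> carrier_mat n n" "As \<in> carrier_mat n n"
      "\<exists>P Pi. P \<in> carrier_mat n n \<and> Pi \<in> carrier_mat n n \<and>
        P * Pi = 1\<^sub>m n \<and> Pi * P = 1\<^sub>m n \<and>
        irreducible_tridiagonal (Pi * A * P) \<and> diagonal_mat (Pi * As * P)"
      "\<exists>P Pi. P \<in> carrier_mat n n \<and> Pi \<in> carrier_mat n n \<and>
        P * Pi = 1\<^sub>m n \<and> Pi * P = 1\<^sub>m n \<and>
        diagonal_mat (Pi * A * P) \<and> irreducible_tridiagonal (Pi * As * P)"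
      using assms unfolding leonard_pair_def n_def by auto
    from L(3) obtain P R where 1: "P \<in> carrier_mat n n" "R \<in> carrier_mat n n" "P * R = 1\<^sub>m n" "R * P = 1\<^sub>m n"
      "irreducible_tridiagonal (R * A * P)" "diagonal_mat (R * As * P)" by blast
    from L(4) obtain Q Qi where 2: "Q \<in> carrier_mat n n" "Qi \<in> carrier_mat n n" "Q * Qi = 1\<^sub>m n" "Qi * Q = 1\<^sub>m n"
      "diagonal_mat (Qi * A * Q)" "irreducible_tridiagonal (Qi * As * Q)" by blast
    show ?thesis by (rule that[OF L(1,2) 1 2])
  qed
  define T where "T = R * A * P"
  define D where "D = R * As * P"
  have Tc: "T \<in> carrier_mat n n" and Dc: "D \<in> carrier_mat n n" using AA P by (auto simp: T_def D_def)
  have Tt: "irreducible_tridiagonal T" and Dd: "diagonal_mat D" using PT by (auto simp: T_def D_def)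
  have k: "\<And>i. i < n \<Longrightarrow> kf T i \<noteq> 0" using kf_nz[OF Tc Tt] by blast
  define f where "f X = P * tau n T (R * X * P) * R" for X
  have fc: "f X \<in> carrier_mat n n" for X using P unfolding f_def by (intro mult_carrier_mat[of _ n n _ n]) auto
  have RXP: "R * X * P \<in> carrier_mat n n" if "X \<in> carrier_mat n n" for X using P that by (intro mult_carrier_mat[of _ n n _ n]) auto
  have f_add: "f (X + Y) = f X + f Y" if "X \<in> carrier_mat n n" "Y \<in> carrier_mat n n" for X Y
  proof -
    have "R * (X + Y) * P = R * X * P + R * Y * P" by (rule conj_add) (use P that in auto)
    hence "tau n T (R * (X + Y) * P) = tau n T (R * X * P) + tau n T (R * Y * P)"
      using tau_add[OF RXP[OF that(1)] RXP[OF that(2)]] by simp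
    thus ?thesis unfolding f_def using conj_add[of R n P "tau n T (R * X * P)" "tau n T (R * Y * P)"] P by simp
  qed
  have f_smult: "f (c \<cdot>\<^sub>m X) = c \<cdot>\<^sub>m f X" if "X \<in> carrier_mat n n" for c X
  proof -
    have "R * (c \<cdot>\<^sub>m X) * P = c \<cdot>\<^sub>m (R * X * P)" by (rule conj_smult) (use P that in auto)
    hence "tau n T (R * (c \<cdot>\<^sub>m X) * P) = c \<cdot>\<^sub>m tau n T (R * X * P)"
      using tau_smult[OF RXP[OF that]] by simp
    thus ?thesis unfolding f_def using conj_smult[of R n P "tau n T (R * X * P)" c] P by simp
  qed
  have f_mult: "f (X * Y) = f Y * f X" if "X \<in> carrier_mat n n" "Y \<in> carrier_mat n n" for X Y
  proof -
    have "R * (X * Y) * P = (R * X * P) * (R * Y * P)" by (rule conj_mult) (use P that in auto)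
    hence "tau n T (R * (X * Y) * P) = tau n T (R * Y * P) * tau n T (R * X * P)"
      using tau_mult[OF k RXP[OF that(1)] RXP[OF that(2)]] by simp
    thus ?thesis unfolding f_def using conj_mult[of R n P "tau n T (R * Y * P)" "tau n T (R * X * P)"] P by simp
  qed
  have f_inv: "f (f X) = X" if "X \<in> carrier_mat n n" for X
  proof -
    have "R * f X * P = tau n T (R * X * P)" unfolding f_def by (rule conj_inv) (use P in auto)
    hence "f (f X) = P * (R * X * P) * R" unfolding f_def using tau_tau[OF k RXP[OF that]] by simp
    also have "\<dots> = X" by (rule conj_inv) (use P that in auto)
    finally show ?thesis .
  qed
  have PTR: "P * (R * X * P) * R = X" if "X \<in> carrier_mat n n" for X
    by (rule conj_inv) (use P that in auto)
  have fA: "f A = A"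
  proof -
    have "f A = P * tau n T T * R" unfolding f_def T_def ..
    also have "\<dots> = P * T * R" using tau_T[OF Tc Tt] by simp
    also have "\<dots> = A" unfolding T_def by (rule PTR[OF AA(1)])
    finally show ?thesis .
  qed
  have fAs: "f As = As"
  proof -
    have "f As = P * tau n T D * R" unfolding f_def D_def ..
    also have "\<dots> = P * D * R" using tau_D[OF Dc Dd k] by simp
    also have "\<dots> = As" unfolding D_def by (rule PTR[OF AA(2)])
    finally show ?thesis .
  qed
  have anti_f: "antiautomorphism d f"
  proof -
    have "bij_betw f (carrier_mat n n) (carrier_mat n n)"
      by (rule bij_betw_byWitness[where f' = f]) (use f_inv fc in auto)
    moreover have "\<forall>X\<in>carrier_mat n n. \<forall>Y\<in>carrier_mat n n. f (X + Y) = f X + f Y" using f_add by blast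
    moreover have "\<forall>c. \<forall>X\<in>carrier_mat n n. f (c \<cdot>\<^sub>m X) = c \<cdot>\<^sub>m f X" using f_smult by blast
    moreover have "\<forall>X\<in>carrier_mat n n. \<forall>Y\<in>carrier_mat n n. f (X * Y) = f Y * f X" using f_mult by blast
    ultimately show ?thesis unfolding antiautomorphism_def n_def by blast
  qed
  have uniq: "g X = f X" if g: "antiautomorphism d g" "g A = A" "g As = As" and X: "X \<in> carrier_mat n n" for g X
  proof -
    have gc: "\<And>X. X \<in> carrier_mat n n \<Longrightarrow> g X \<in> carrier_mat n n"
      and g_add: "\<And>X Y. X \<in> carrier_mat n n \<Longrightarrow> Y \<in> carrier_mat n n \<Longrightarrow> g (X + Y) = g X + g Y"
      and g_smult: "\<And>c X. X \<in> carrier_mat n n \<Longrightarrow> g (c \<cdot>\<^sub>m X) = c \<cdot>\<^sub>m g X"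
      and g_mult: "\<And>X Y. X \<in> carrier_mat n n \<Longrightarrow> Y \<in> carrier_mat n n \<Longrightarrow> g (X * Y) = g Y * g X"
  proof -
    have G: "bij_betw g (carrier_mat n n) (carrier_mat n n)"
      "\<forall>X\<in>carrier_mat n n. \<forall>Y\<in>carrier_mat n n. g (X + Y) = g X + g Y"
      "\<forall>c. \<forall>X\<in>carrier_mat n n. g (c \<cdot>\<^sub>m X) = c \<cdot>\<^sub>m g X"
      "\<forall>X\<in>carrier_mat n n. \<forall>Y\<in>carrier_mat n n. g (X * Y) = g Y * g X"
      using g(1) unfolding antiautomorphism_def n_def by simp_all
    show "\<And>X. X \<in> carrier_mat n n \<Longrightarrow> g X \<in> carrier_mat n n" using G(1) bij_betwE by blast
    show "\<And>X Y. X \<in> carrier_mat n n \<Longrightarrow> Y \<in> carrier_mat n n \<Longrightarrow> g (X + Y) = g X + g Y" using G(2) by blast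
    show "\<And>c X. X \<in> carrier_mat n n \<Longrightarrow> g (c \<cdot>\<^sub>m X) = c \<cdot>\<^sub>m g X" using G(3) by blast
    show "\<And>X Y. X \<in> carrier_mat n n \<Longrightarrow> Y \<in> carrier_mat n n \<Longrightarrow> g (X * Y) = g Y * g X" using G(4) by blast
  qed
    have g1: "g (1\<^sub>m n) = 1\<^sub>m n" using antiauto_one[OF g(1)] unfolding n_def .
    have f1: "f (1\<^sub>m n) = 1\<^sub>m n" using antiauto_one[OF anti_f] unfolding n_def .
    define S where "S = {Y \<in> carrier_mat n n. g (P * Y * R) = f (P * Y * R)}"
    have PYR: "P * Y * R \<in> carrier_mat n n" if "Y \<in> carrier_mat n n" for Y using P that by (intro mult_carrier_mat[of _ n n _ n]) auto
    have sub: "subalg n S" unfolding subalg_def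
    proof (intro conjI ballI allI)
      show "S \<subseteq> carrier_mat n n" unfolding S_def by auto
      have "P * 1\<^sub>m n * R = 1\<^sub>m n" by (rule conj_one) (use P in auto)
      thus "1\<^sub>m n \<in> S" unfolding S_def using g1 f1 by simp
    next
      fix X Y assume XY: "X \<in> S" "Y \<in> S"
      hence c: "X \<in> carrier_mat n n" "Y \<in> carrier_mat n n" and e: "g (P * X * R) = f (P * X * R)" "g (P * Y * R) = f (P * Y * R)"
        unfolding S_def by auto
      have "P * (X + Y) * R = P * X * R + P * Y * R" by (rule conj_add) (use P c in auto)
      thus "X + Y \<in> S" unfolding S_def using c e g_add f_add PYR by simp
      have "P * (X * Y) * R = (P * X * R) * (P * Y * R)" by (rule conj_mult) (use P c in auto)
      thus "X * Y \<in> S" unfolding S_def using c e g_mult f_mult PYR by simp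
    next
      fix c X assume "X \<in> S"
      hence cX: "X \<in> carrier_mat n n" and e: "g (P * X * R) = f (P * X * R)" unfolding S_def by auto
      have "P * (c \<cdot>\<^sub>m X) * R = c \<cdot>\<^sub>m (P * X * R)" by (rule conj_smult) (use P cX in auto)
      thus "c \<cdot>\<^sub>m X \<in> S" unfolding S_def using cX e g_smult f_smult PYR by simp
    qed
    have TS: "T \<in> S" unfolding S_def T_def using PTR[OF AA(1)] g(2) fA Tc T_def by simp
    have DS: "D \<in> S" unfolding S_def D_def using PTR[OF AA(2)] g(3) fAs Dc D_def by simp
    have dist: "\<forall>i<n. \<forall>j<n. i \<noteq> j \<longrightarrow> D $$ (i,i) \<noteq> D $$ (j,j)"
      unfolding D_def by (rule diag_distinct[OF AA(2) P PT(2) Q QT(2)])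
    have "carrier_mat n n \<subseteq> S" by (rule subalg_full[OF sub TS Tc Tt DS Dc Dd dist])
    hence "R * X * P \<in> S" using RXP[OF X] by auto
    thus ?thesis unfolding S_def using PTR[OF X] by simp
  qed
  show ?thesis
  proof (intro exI[of _ f] conjI allI impI ballI)
    show "antiautomorphism d f" "f A = A" "f As = As" by (fact anti_f, fact fA, fact fAs)
  next
    fix g and X :: "'a mat" assume "antiautomorphism d g \<and> g A = A \<and> g As = As" "X \<in> carrier_mat (d+1) (d+1)"
    thus "g X = f X" using uniq unfolding n_def by blast
  next
    fix X :: "'a mat" assume "X \<in> carrier_mat (d+1) (d+1)"
    thus "f (f X) = X" using f_inv unfolding n_def by blast
  qed
qed

end
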